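(* Let $m_1,m_2,m_3>0$ and let $q_1,q_2,q_3$ be a choreographic solution of $$\ddot q_k=\sum_{j=1,\,j\neq k}^{3} m_j (q_j-q_k)\, f\!\left(\|q_j-q_k\|^2\right),\qquad k\in\{1,2,3\},$$ where $f:\mathbb{R}_{>0}\to\mathbb{R}_{>0}$ is positive and $\sqrt{x}\,f(x)$ is decreasing. If the curve along which the masses move has an axis of symmetry, then $m_1=m_2=m_3$.
   Context: A choreographic solution is one for which there exist a twice continuously differentiable periodic function $p$ and constants $h_1,h_2,h_3$ with $q_k(t)=p(t+h_k)$. The axis of symmetry hypothesis is understood, as in the paper, as: the curve lies in the plane and (after choice of coordinates and time origin) $p(-t)=\begin{pmatrix}1&0\\0&-1\end{pmatrix}p(t)$ for all $t$. The center of mass is assumed at the origin: $\sum_k m_k q_k=0$. *)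

theory Defs
  imports "HOL-Analysis.Analysis"
begin

definition refl_axis :: "real^2 \<Rightarrow> real^2" where
  "refl_axis x = (\<chi> i. if i = 1 then x $ 1 else - (x $ i))"

definition C2_periodic :: "(real \<Rightarrow> real^2) \<Rightarrow> bool" where
  "C2_periodic p \<longleftrightarrow>
     (\<exists>p' p'' T. T > 0 \<and> (\<forall>t. p (t + T) = p t) \<and>
        (\<forall>t. (p has_vector_derivative p' t) (at t)) \<and>
        (\<forall>t. (p' has_vector_derivative p'' t) (at t)) \<and>
        continuous_on UNIV p'')"

text \<open>The curve traced by p has an axis of symmetry: after a choice of
  (Euclidean) coordinates, i.e. an isometry g of the plane, and of the time origin s,
  the curve P(t) = g(p(t+s)) satisfies P(-t) = diag(1,-1) P(t).\<close>
definition axis_symmetric :: "(real \<Rightarrow> real^2) \<Rightarrow> bool" where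
  "axis_symmetric p \<longleftrightarrow>
     (\<exists>g :: real^2 \<Rightarrow> real^2. \<exists>s. (\<forall>x y. dist (g x) (g y) = dist x y) \<and>
        (\<forall>t. g (p (- t + s)) = refl_axis (g (p (t + s)))))"

definition choreographic :: "(nat \<Rightarrow> real \<Rightarrow> real^2) \<Rightarrow> (real \<Rightarrow> real^2) \<Rightarrow> bool" where
  "choreographic q p \<longleftrightarrow> C2_periodic p \<and>
     (\<exists>h :: nat \<Rightarrow> real. \<forall>k\<in>{1,2,3}. \<forall>t. q k t = p (t + h k))"

end

theory Submission
  imports Defs
begin

lemma R_add: "refl_axis (x + y) = refl_axis x + refl_axis y"
  by (simp add: refl_axis_def vec_eq_iff)
lemma R_scale: "refl_axis (r *\<^sub>R x) = r *\<^sub>R refl_axis x"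
  by (simp add: refl_axis_def vec_eq_iff)
lemma R_diff: "refl_axis (x - y) = refl_axis x - refl_axis y"
  by (simp add: refl_axis_def vec_eq_iff)
lemma R_R: "refl_axis (refl_axis x) = x"
  by (simp add: refl_axis_def vec_eq_iff)
lemma R_linear: "linear refl_axis"
  by (simp add: linearI R_add R_scale)
lemma R_bl: "bounded_linear refl_axis"
  using R_linear linear_conv_bounded_linear by blast
lemma R_norm: "norm (refl_axis x) = norm x"
  unfolding norm_eq_sqrt_inner inner_vec_def sum_2
  by (simp add: refl_axis_def)
lemma R_inj: "refl_axis x = refl_axis y \<Longrightarrow> x = y"
  by (metis R_R)

lemma F_strict:
  fixes F :: "real \<Rightarrow> real"
  assumes Fp: "\<forall>x>0. F x > 0"
    and Fd: "\<forall>x y. 0 < x \<longrightarrow> x < y \<longrightarrow> sqrt y * F y < sqrt x * F x"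
    and "0 < x" "x < y"
  shows "F y < F x"
proof -
  have "sqrt x < sqrt y" using assms by simp
  moreover have "F y > 0" using Fp assms by simp
  ultimately have "sqrt x * F y < sqrt y * F y" by simp
  also have "\<dots> < sqrt x * F x" using Fd assms by blast
  finally show ?thesis using assms by (simp add: mult_less_cancel_left)
qed

lemma F_inj:
  fixes F :: "real \<Rightarrow> real"
  assumes Fp: "\<forall>x>0. F x > 0"
    and Fd: "\<forall>x y. 0 < x \<longrightarrow> x < y \<longrightarrow> sqrt y * F y < sqrt x * F x"
    and "0 < x" "0 < y" "F x = F y"
  shows "x = y"
  using F_strict[OF Fp Fd, of x y] F_strict[OF Fp Fd, of y x] assms
  by (cases x y rule: linorder_cases) auto

lemma F_less:
  fixes F :: "real \<Rightarrow> real"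
  assumes Fp: "\<forall>x>0. F x > 0"
    and Fd: "\<forall>x y. 0 < x \<longrightarrow> x < y \<longrightarrow> sqrt y * F y < sqrt x * F x"
    and "0 < x" "0 < y" "F x < F y"
  shows "y < x"
  using F_strict[OF Fp Fd, of x y] assms
  by (cases x y rule: linorder_cases) auto

lemma branch:
  fixes F :: "real \<Rightarrow> real" and u v w :: "real^2"
  assumes Fp: "\<forall>x>0. F x > 0"
    and Fd: "\<forall>x y. 0 < x \<longrightarrow> x < y \<longrightarrow> sqrt y * F y < sqrt x * F x"
    and nz: "u \<noteq> 0" "v \<noteq> 0" "w \<noteq> 0" and m: "m \<noteq> 0" and k: "k \<noteq> 0"
    and e1: "m *\<^sub>R (u - w) = k *\<^sub>R v"
    and e2: "m *\<^sub>R (F ((norm u)\<^sup>2) *\<^sub>R u - F ((norm w)\<^sup>2) *\<^sub>R w) = k *\<^sub>R (F ((norm v)\<^sup>2) *\<^sub>R v)"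
  shows "(norm u = norm v \<and> norm v = norm w) \<or>
         ((\<exists>l<0. u = l *\<^sub>R w) \<and> (\<exists>l. v = l *\<^sub>R w) \<and>
          ((norm u < norm v \<and> norm v < norm w) \<or> (norm w < norm v \<and> norm v < norm u)))"
proof -
  define fu where "fu = F ((norm u)\<^sup>2)"
  define fv where "fv = F ((norm v)\<^sup>2)"
  define fw where "fw = F ((norm w)\<^sup>2)"
  have pu: "(norm u)\<^sup>2 > 0" and pv: "(norm v)\<^sup>2 > 0" and pw: "(norm w)\<^sup>2 > 0" using nz by auto
  have fpos: "fu > 0" "fv > 0" "fw > 0" using Fp pu pv pw by (auto simp: fu_def fv_def fw_def)
  have "m *\<^sub>R (fu *\<^sub>R u - fw *\<^sub>R w) = fv *\<^sub>R (m *\<^sub>R (u - w))"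
    using e1 e2 by (simp add: fu_def fv_def fw_def)
  then have "fu *\<^sub>R u - fw *\<^sub>R w = fv *\<^sub>R (u - w)"
    using m by (metis (no_types, lifting) scaleR_left_commute scaleR_cancel_left)
  then have key: "(fu - fv) *\<^sub>R u = (fw - fv) *\<^sub>R w"
    by (simp add: algebra_simps)
  have uw: "u \<noteq> w" using e1 k nz by auto
  show ?thesis
  proof (cases "fu = fv")
    case True
    then have "fw = fv" using key nz by simp
    then have "(norm u)\<^sup>2 = (norm v)\<^sup>2" "(norm w)\<^sup>2 = (norm v)\<^sup>2"
      using F_inj[OF Fp Fd] pu pv pw True by (auto simp: fu_def fv_def fw_def)
    then have "norm u = norm v" "norm w = norm v"
      by (auto simp: power2_eq_iff_nonneg)
    then show ?thesis by simp
  next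
    case False
    define l where "l = (fw - fv) / (fu - fv)"
    have ul: "u = l *\<^sub>R w"
      using key False unfolding l_def
      by (metis (no_types, lifting) divide_inverse_commute eq_vector_fraction_iff right_minus_eq)
    have l0: "l \<noteq> 0" using ul nz by auto
    have l1: "l \<noteq> 1" using ul uw by auto
    have lk: "(fu - fv) * l = fw - fv" using False by (simp add: l_def)
    have nu: "norm u = \<bar>l\<bar> * norm w" using ul by simp
    have lneg: "l < 0"
    proof (rule ccontr)
      assume "\<not> l < 0"
      then have lp: "l > 0" using l0 by simp
      have nu': "norm u = l * norm w" using nu lp by simp
      have "(fu - fv) * l * norm w = (fw - fv) * norm w" using lk by simp
      then have gg: "norm u * fu - norm w * fw = fv * (norm u - norm w)"
        using nu' by (simp add: algebra_simps)
      have gdef: "\<And>r. r > 0 \<Longrightarrow> sqrt (r\<^sup>2) = r" by simp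
      show False
      proof (cases "l > 1")
        case True
        then have lt: "norm w < norm u" using nu' nz by simp
        then have "(norm w)\<^sup>2 < (norm u)\<^sup>2" by (simp add: power_strict_mono)
        then have "sqrt ((norm u)\<^sup>2) * fu < sqrt ((norm w)\<^sup>2) * fw"
          using Fd pw unfolding fu_def fw_def by blast
        then have "norm u * fu < norm w * fw" by simp
        moreover have "fv * (norm u - norm w) > 0" using lt fpos by simp
        ultimately show False using gg by linarith
      next
        case False
        then have "l < 1" using l1 by simp
        then have lt: "norm u < norm w" using nu' nz lp by simp
        then have "(norm u)\<^sup>2 < (norm w)\<^sup>2" by (simp add: power_strict_mono)
        then have "sqrt ((norm w)\<^sup>2) * fw < sqrt ((norm u)\<^sup>2) * fu"
          using Fd pu unfolding fu_def fw_def by blast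
        then have "norm w * fw < norm u * fu" by simp
        moreover have "fv * (norm u - norm w) < 0" using lt fpos by (simp add: mult_pos_neg)
        ultimately show False using gg by linarith
      qed
    qed
    have vl: "v = ((m / k) * (l - 1)) *\<^sub>R w"
    proof -
      have "k *\<^sub>R v = (m * (l - 1)) *\<^sub>R w" using e1 ul by (simp add: algebra_simps)
      have "v = (1/k) *\<^sub>R (k *\<^sub>R v)" using k by simp
      also have "\<dots> = (1/k) *\<^sub>R ((m * (l - 1)) *\<^sub>R w)" using \<open>k *\<^sub>R v = _\<close> by simp
      also have "\<dots> = ((m / k) * (l - 1)) *\<^sub>R w" by simp
      finally show ?thesis .
    qed
    have ord: "(fu > fv \<and> fv > fw) \<or> (fu < fv \<and> fv < fw)"
    proof (cases "fu > fv")
      case True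
      then have "(fu - fv) * l < 0" using lneg by (simp add: mult_pos_neg)
      then show ?thesis using True lk by simp
    next
      case False
      then have "fu < fv" using \<open>fu \<noteq> fv\<close> by simp
      then have "(fu - fv) * l > 0" using lneg by (simp add: mult_neg_neg)
      then show ?thesis using \<open>fu < fv\<close> lk by simp
    qed
    have "((norm u)\<^sup>2 < (norm v)\<^sup>2 \<and> (norm v)\<^sup>2 < (norm w)\<^sup>2) \<or> ((norm w)\<^sup>2 < (norm v)\<^sup>2 \<and> (norm v)\<^sup>2 < (norm u)\<^sup>2)"
      using ord F_less[OF Fp Fd] pu pv pw unfolding fu_def fv_def fw_def by blast
    then have "(norm u < norm v \<and> norm v < norm w) \<or> (norm w < norm v \<and> norm v < norm u)"
      by (meson norm_ge_zero power_less_imp_less_base)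
    then show ?thesis using lneg ul vl by blast
  qed
qed

definition phi :: "(real \<Rightarrow> real) \<Rightarrow> real^2 \<Rightarrow> real^2" where
  "phi F x = F ((norm x)\<^sup>2) *\<^sub>R x"

lemma phi_R: "phi F (refl_axis x) = refl_axis (phi F x)"
  by (simp add: phi_def R_norm R_scale)

definition hyps where
  "hyps F P A m1 m2 m3 H1 H2 H3 c T \<longleftrightarrow>
   (m1::real) > 0 \<and> (m2::real) > 0 \<and> (m3::real) > 0 \<and> (\<forall>x>0. F x > (0::real)) \<and>
   (\<forall>x y. 0 < x \<longrightarrow> x < y \<longrightarrow> sqrt y * F y < sqrt x * F x) \<and>
   continuous_on UNIV (P :: real \<Rightarrow> real^2) \<and> (T::real) > 0 \<and> (\<forall>t. P (t + T) = P t) \<and>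
   (\<forall>t. P (- t) = refl_axis (P t)) \<and> (\<forall>t. (A :: real \<Rightarrow> real^2) (- t) = refl_axis (A t)) \<and>
   (\<forall>t. A (t + H1) = m2 *\<^sub>R phi F (P (t + H2) - P (t + H1)) + m3 *\<^sub>R phi F (P (t + H3) - P (t + H1))) \<and>
   (\<forall>t. A (t + H2) = m1 *\<^sub>R phi F (P (t + H1) - P (t + H2)) + m3 *\<^sub>R phi F (P (t + H3) - P (t + H2))) \<and>
   (\<forall>t. A (t + H3) = m1 *\<^sub>R phi F (P (t + H1) - P (t + H3)) + m2 *\<^sub>R phi F (P (t + H2) - P (t + H3))) \<and>
   (\<forall>t. m1 *\<^sub>R P (t + H1) + m2 *\<^sub>R P (t + H2) + m3 *\<^sub>R P (t + H3) = c) \<and>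
   (\<forall>t. P (t + H1) \<noteq> P (t + H2) \<and> P (t + H1) \<noteq> P (t + H3) \<and> P (t + H2) \<noteq> P (t + H3))"

lemma hyps_swap23:
  "hyps F P A m1 m2 m3 H1 H2 H3 c T \<Longrightarrow> hyps F P A m1 m3 m2 H1 H3 H2 c T"
  unfolding hyps_def by (auto simp: algebra_simps) metis+

lemma hyps_swap12:
  "hyps F P A m1 m2 m3 H1 H2 H3 c T \<Longrightarrow> hyps F P A m2 m1 m3 H2 H1 H3 c T"
  unfolding hyps_def by (auto simp: algebra_simps) metis+

lemma refcom:
  assumes "hyps F P A m1 m2 m3 H1 H2 H3 c T"
  shows "m1 *\<^sub>R P (u - H1) + m2 *\<^sub>R P (u - H2) + m3 *\<^sub>R P (u - H3) = refl_axis c"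
proof -
  have com: "m1 *\<^sub>R P (- u + H1) + m2 *\<^sub>R P (- u + H2) + m3 *\<^sub>R P (- u + H3) = c"
    using assms unfolding hyps_def by blast
  have rP: "\<And>x. P (- u + x) = refl_axis (P (u - x))"
    using assms unfolding hyps_def by (metis minus_diff_eq uminus_add_conv_diff)
  have "refl_axis (m1 *\<^sub>R P (u - H1) + m2 *\<^sub>R P (u - H2) + m3 *\<^sub>R P (u - H3)) = c"
    using com rP by (simp add: R_add R_scale)
  then show ?thesis using R_R by metis
qed

lemma c_fixed:
  assumes h: "hyps F P A m1 m2 m3 H1 H2 H3 c T"
  shows "refl_axis c = c"
proof -
  have com: "\<And>t. m1 *\<^sub>R P (t + H1) + m2 *\<^sub>R P (t + H2) + m3 *\<^sub>R P (t + H3) = c"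
    using h unfolding hyps_def by blast
  note rc = refcom[OF h]
  have c1: "m1 *\<^sub>R P 0 + m2 *\<^sub>R P (H2 - H1) + m3 *\<^sub>R P (H3 - H1) = c" using com[of "- H1"] by simp
  have c2: "m1 *\<^sub>R P (H1 - H2) + m2 *\<^sub>R P 0 + m3 *\<^sub>R P (H3 - H2) = c" using com[of "- H2"] by simp
  have c3: "m1 *\<^sub>R P (H1 - H3) + m2 *\<^sub>R P (H2 - H3) + m3 *\<^sub>R P 0 = c" using com[of "- H3"] by simp
  have r1: "m1 *\<^sub>R P 0 + m2 *\<^sub>R P (H1 - H2) + m3 *\<^sub>R P (H1 - H3) = refl_axis c" using rc[of H1] by simp
  have r2: "m1 *\<^sub>R P (H2 - H1) + m2 *\<^sub>R P 0 + m3 *\<^sub>R P (H2 - H3) = refl_axis c" using rc[of H2] by simp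
  have r3: "m1 *\<^sub>R P (H3 - H1) + m2 *\<^sub>R P (H3 - H2) + m3 *\<^sub>R P 0 = refl_axis c" using rc[of H3] by simp
  have "(m1 + m2 + m3) *\<^sub>R c = m1 *\<^sub>R (m1 *\<^sub>R P 0 + m2 *\<^sub>R P (H2 - H1) + m3 *\<^sub>R P (H3 - H1))
     + m2 *\<^sub>R (m1 *\<^sub>R P (H1 - H2) + m2 *\<^sub>R P 0 + m3 *\<^sub>R P (H3 - H2))
     + m3 *\<^sub>R (m1 *\<^sub>R P (H1 - H3) + m2 *\<^sub>R P (H2 - H3) + m3 *\<^sub>R P 0)"
    using c1 c2 c3 by (simp add: algebra_simps)
  also have "\<dots> = m1 *\<^sub>R (m1 *\<^sub>R P 0 + m2 *\<^sub>R P (H1 - H2) + m3 *\<^sub>R P (H1 - H3))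
     + m2 *\<^sub>R (m1 *\<^sub>R P (H2 - H1) + m2 *\<^sub>R P 0 + m3 *\<^sub>R P (H2 - H3))
     + m3 *\<^sub>R (m1 *\<^sub>R P (H3 - H1) + m2 *\<^sub>R P (H3 - H2) + m3 *\<^sub>R P 0)"
    by (simp add: algebra_simps)
  also have "\<dots> = (m1 + m2 + m3) *\<^sub>R refl_axis c"
    using r1 r2 r3 by (simp add: algebra_simps)
  finally have "(m1 + m2 + m3) *\<^sub>R c = (m1 + m2 + m3) *\<^sub>R refl_axis c" .
  moreover have "m1 + m2 + m3 \<noteq> 0" using h unfolding hyps_def by simp
  ultimately show ?thesis by simp
qed

definition ee :: "(real \<Rightarrow> real^2) \<Rightarrow> real \<Rightarrow> real \<Rightarrow> real^2" where
  "ee P s d = P (s + d) - P s"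

lemma hypsD:
  assumes "hyps F P A m1 m2 m3 H1 H2 H3 c T"
  shows "m1 > 0" "m2 > 0" "m3 > 0" "\<forall>x>0. F x > 0"
    "\<forall>x y. 0 < x \<longrightarrow> x < y \<longrightarrow> sqrt y * F y < sqrt x * F x"
    "continuous_on UNIV P" "T > 0" "\<And>t. P (t + T) = P t"
    "\<And>t. P (- t) = refl_axis (P t)" "\<And>t. A (- t) = refl_axis (A t)"
    "\<And>t. A (t + H1) = m2 *\<^sub>R phi F (P (t + H2) - P (t + H1)) + m3 *\<^sub>R phi F (P (t + H3) - P (t + H1))"
    "\<And>t. A (t + H2) = m1 *\<^sub>R phi F (P (t + H1) - P (t + H2)) + m3 *\<^sub>R phi F (P (t + H3) - P (t + H2))"
    "\<And>t. A (t + H3) = m1 *\<^sub>R phi F (P (t + H1) - P (t + H3)) + m2 *\<^sub>R phi F (P (t + H2) - P (t + H3))"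
    "\<And>t. m1 *\<^sub>R P (t + H1) + m2 *\<^sub>R P (t + H2) + m3 *\<^sub>R P (t + H3) = c"
    "\<And>t. P (t + H1) \<noteq> P (t + H2)" "\<And>t. P (t + H1) \<noteq> P (t + H3)" "\<And>t. P (t + H2) \<noteq> P (t + H3)"
  using assms unfolding hyps_def by auto

lemma six:
  assumes h: "hyps F P A m1 m2 m3 H1 H2 H3 c T"
  shows
    "m2 *\<^sub>R ee P s (H2 - H1) + m3 *\<^sub>R ee P s (H3 - H1) = c - (m1 + m2 + m3) *\<^sub>R P s"
    "m1 *\<^sub>R ee P s (H1 - H2) + m3 *\<^sub>R ee P s (H3 - H2) = c - (m1 + m2 + m3) *\<^sub>R P s"
    "m1 *\<^sub>R ee P s (H1 - H3) + m2 *\<^sub>R ee P s (H2 - H3) = c - (m1 + m2 + m3) *\<^sub>R P s"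
    "m2 *\<^sub>R ee P s (H1 - H2) + m3 *\<^sub>R ee P s (H1 - H3) = c - (m1 + m2 + m3) *\<^sub>R P s"
    "m1 *\<^sub>R ee P s (H2 - H1) + m3 *\<^sub>R ee P s (H2 - H3) = c - (m1 + m2 + m3) *\<^sub>R P s"
    "m1 *\<^sub>R ee P s (H3 - H1) + m2 *\<^sub>R ee P s (H3 - H2) = c - (m1 + m2 + m3) *\<^sub>R P s"
    "m2 *\<^sub>R phi F (ee P s (H2 - H1)) + m3 *\<^sub>R phi F (ee P s (H3 - H1)) = A s"
    "m1 *\<^sub>R phi F (ee P s (H1 - H2)) + m3 *\<^sub>R phi F (ee P s (H3 - H2)) = A s"
    "m1 *\<^sub>R phi F (ee P s (H1 - H3)) + m2 *\<^sub>R phi F (ee P s (H2 - H3)) = A s"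
    "m2 *\<^sub>R phi F (ee P s (H1 - H2)) + m3 *\<^sub>R phi F (ee P s (H1 - H3)) = A s"
    "m1 *\<^sub>R phi F (ee P s (H2 - H1)) + m3 *\<^sub>R phi F (ee P s (H2 - H3)) = A s"
    "m1 *\<^sub>R phi F (ee P s (H3 - H1)) + m2 *\<^sub>R phi F (ee P s (H3 - H2)) = A s"
proof -
  note hd = hypsD[OF h]
  have cf: "refl_axis c = c" by (rule c_fixed[OF h])
  have Pm: "\<And>x. P (- s + x) = refl_axis (P (s + - x))"
    using hd(9) by (metis minus_add_distrib minus_minus)
  have Pm0: "P (- s) = refl_axis (P s)" using hd(9) by simp
  have Em: "\<And>x. P (- s + x) - P (- s) = refl_axis (ee P s (- x))"
    using Pm Pm0 by (simp add: ee_def R_diff)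
  have rc: "\<And>u. m1 *\<^sub>R P (u - H1) + m2 *\<^sub>R P (u - H2) + m3 *\<^sub>R P (u - H3) = c"
    using refcom[OF h] cf by simp
  show "m2 *\<^sub>R ee P s (H2 - H1) + m3 *\<^sub>R ee P s (H3 - H1) = c - (m1 + m2 + m3) *\<^sub>R P s"
    using hd(14)[of "s - H1"] by (simp add: ee_def algebra_simps)
  show "m1 *\<^sub>R ee P s (H1 - H2) + m3 *\<^sub>R ee P s (H3 - H2) = c - (m1 + m2 + m3) *\<^sub>R P s"
    using hd(14)[of "s - H2"] by (simp add: ee_def algebra_simps)
  show "m1 *\<^sub>R ee P s (H1 - H3) + m2 *\<^sub>R ee P s (H2 - H3) = c - (m1 + m2 + m3) *\<^sub>R P s"
    using hd(14)[of "s - H3"] by (simp add: ee_def algebra_simps)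
  show "m2 *\<^sub>R ee P s (H1 - H2) + m3 *\<^sub>R ee P s (H1 - H3) = c - (m1 + m2 + m3) *\<^sub>R P s"
    using rc[of "s + H1"] by (simp add: ee_def algebra_simps)
  show "m1 *\<^sub>R ee P s (H2 - H1) + m3 *\<^sub>R ee P s (H2 - H3) = c - (m1 + m2 + m3) *\<^sub>R P s"
    using rc[of "s + H2"] by (simp add: ee_def algebra_simps)
  show "m1 *\<^sub>R ee P s (H3 - H1) + m2 *\<^sub>R ee P s (H3 - H2) = c - (m1 + m2 + m3) *\<^sub>R P s"
    using rc[of "s + H3"] by (simp add: ee_def algebra_simps)
  show "m2 *\<^sub>R phi F (ee P s (H2 - H1)) + m3 *\<^sub>R phi F (ee P s (H3 - H1)) = A s"
    using hd(11)[of "s - H1"] by (simp add: ee_def algebra_simps)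
  show "m1 *\<^sub>R phi F (ee P s (H1 - H2)) + m3 *\<^sub>R phi F (ee P s (H3 - H2)) = A s"
    using hd(12)[of "s - H2"] by (simp add: ee_def algebra_simps)
  show "m1 *\<^sub>R phi F (ee P s (H1 - H3)) + m2 *\<^sub>R phi F (ee P s (H2 - H3)) = A s"
    using hd(13)[of "s - H3"] by (simp add: ee_def algebra_simps)
  show "m2 *\<^sub>R phi F (ee P s (H1 - H2)) + m3 *\<^sub>R phi F (ee P s (H1 - H3)) = A s"
  proof -
    have "A (- s) = m2 *\<^sub>R phi F (P (- s + (H2 - H1)) - P (- s)) + m3 *\<^sub>R phi F (P (- s + (H3 - H1)) - P (- s))"
      using hd(11)[of "- s - H1"] by (simp add: algebra_simps)
    then have "refl_axis (A s) = refl_axis (m2 *\<^sub>R phi F (ee P s (H1 - H2)) + m3 *\<^sub>R phi F (ee P s (H1 - H3)))"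
      using hd(10)[of s] Em by (simp add: phi_R R_add R_scale)
    then show ?thesis by (metis R_inj)
  qed
  show "m1 *\<^sub>R phi F (ee P s (H2 - H1)) + m3 *\<^sub>R phi F (ee P s (H2 - H3)) = A s"
  proof -
    have "A (- s) = m1 *\<^sub>R phi F (P (- s + (H1 - H2)) - P (- s)) + m3 *\<^sub>R phi F (P (- s + (H3 - H2)) - P (- s))"
      using hd(12)[of "- s - H2"] by (simp add: algebra_simps)
    then have "refl_axis (A s) = refl_axis (m1 *\<^sub>R phi F (ee P s (H2 - H1)) + m3 *\<^sub>R phi F (ee P s (H2 - H3)))"
      using hd(10)[of s] Em by (simp add: phi_R R_add R_scale)
    then show ?thesis by (metis R_inj)
  qed
  show "m1 *\<^sub>R phi F (ee P s (H3 - H1)) + m2 *\<^sub>R phi F (ee P s (H3 - H2)) = A s"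
  proof -
    have "A (- s) = m1 *\<^sub>R phi F (P (- s + (H1 - H3)) - P (- s)) + m2 *\<^sub>R phi F (P (- s + (H2 - H3)) - P (- s))"
      using hd(13)[of "- s - H3"] by (simp add: algebra_simps)
    then have "refl_axis (A s) = refl_axis (m1 *\<^sub>R phi F (ee P s (H3 - H1)) + m2 *\<^sub>R phi F (ee P s (H3 - H2)))"
      using hd(10)[of s] Em by (simp add: phi_R R_add R_scale)
    then show ?thesis by (metis R_inj)
  qed
qed

lemma ee_nz:
  assumes h: "hyps F P A m1 m2 m3 H1 H2 H3 c T"
  shows "ee P s (H2 - H1) \<noteq> 0" "ee P s (H3 - H1) \<noteq> 0" "ee P s (H1 - H2) \<noteq> 0"
        "ee P s (H3 - H2) \<noteq> 0" "ee P s (H1 - H3) \<noteq> 0" "ee P s (H2 - H3) \<noteq> 0"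
proof -
  note hd = hypsD[OF h]
  show "ee P s (H2 - H1) \<noteq> 0" using hd(15)[of "s - H1"] by (simp add: ee_def algebra_simps)
  show "ee P s (H3 - H1) \<noteq> 0" using hd(16)[of "s - H1"] by (simp add: ee_def algebra_simps)
  show "ee P s (H1 - H2) \<noteq> 0" using hd(15)[of "s - H2"] by (simp add: ee_def algebra_simps)
  show "ee P s (H3 - H2) \<noteq> 0" using hd(17)[of "s - H2"] by (simp add: ee_def algebra_simps)
  show "ee P s (H1 - H3) \<noteq> 0" using hd(16)[of "s - H3"] by (simp add: ee_def algebra_simps)
  show "ee P s (H2 - H3) \<noteq> 0" using hd(17)[of "s - H3"] by (simp add: ee_def algebra_simps)
qed

lemma lin_rearr: "(a::'a::real_vector) + b = c + d \<Longrightarrow> a - d = c - b"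
  by (metis add_diff_cancel_right' add_diff_eq diff_add_eq)

lemma tri_help:
  fixes x y z :: "real^2"
  assumes "p *\<^sub>R x + q *\<^sub>R y = r *\<^sub>R y + p *\<^sub>R z"
  shows "p *\<^sub>R (x - z) = (r - q) *\<^sub>R y"
  using lin_rearr[OF assms] by (simp add: scaleR_right_diff_distrib scaleR_left_diff_distrib)

lemma tri_help2:
  fixes x y z :: "real^2"
  assumes "r *\<^sub>R y + q *\<^sub>R x = r *\<^sub>R z + p *\<^sub>R x"
  shows "r *\<^sub>R (y - z) = (p - q) *\<^sub>R x"
proof -
  have "r *\<^sub>R y + q *\<^sub>R x = p *\<^sub>R x + r *\<^sub>R z" using assms by (simp add: add.commute)
  from lin_rearr[OF this] show ?thesis by (simp add: scaleR_right_diff_distrib scaleR_left_diff_distrib)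
qed

lemma triples:
  fixes s :: real
  assumes h: "hyps F P A m1 m2 m3 H1 H2 H3 c T"
  defines "e21 \<equiv> ee P s (H2 - H1)" and "e31 \<equiv> ee P s (H3 - H1)" and "e12 \<equiv> ee P s (H1 - H2)"
    and "e32 \<equiv> ee P s (H3 - H2)" and "e13 \<equiv> ee P s (H1 - H3)" and "e23 \<equiv> ee P s (H2 - H3)"
  shows
    "m2 *\<^sub>R (e21 - e32) = (m1 - m3) *\<^sub>R e31"
    "m2 *\<^sub>R (phi F e21 - phi F e32) = (m1 - m3) *\<^sub>R phi F e31"
    "m1 *\<^sub>R (e31 - e12) = (m3 - m2) *\<^sub>R e32"
    "m1 *\<^sub>R (phi F e31 - phi F e12) = (m3 - m2) *\<^sub>R phi F e32"
    "m3 *\<^sub>R (e32 - e13) = (m2 - m1) *\<^sub>R e12"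
    "m3 *\<^sub>R (phi F e32 - phi F e13) = (m2 - m1) *\<^sub>R phi F e12"
    "m2 *\<^sub>R (e12 - e23) = (m1 - m3) *\<^sub>R e13"
    "m2 *\<^sub>R (phi F e12 - phi F e23) = (m1 - m3) *\<^sub>R phi F e13"
    "m1 *\<^sub>R (e13 - e21) = (m3 - m2) *\<^sub>R e23"
    "m1 *\<^sub>R (phi F e13 - phi F e21) = (m3 - m2) *\<^sub>R phi F e23"
    "m3 *\<^sub>R (e23 - e31) = (m2 - m1) *\<^sub>R e21"
    "m3 *\<^sub>R (phi F e23 - phi F e31) = (m2 - m1) *\<^sub>R phi F e21"
proof -
  note S = six[OF h, of s, folded e21_def e31_def e12_def e32_def e13_def e23_def]
  show "m2 *\<^sub>R (e21 - e32) = (m1 - m3) *\<^sub>R e31"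
    by (rule tri_help) (metis S(1) S(6) add.commute)
  show "m2 *\<^sub>R (phi F e21 - phi F e32) = (m1 - m3) *\<^sub>R phi F e31"
    by (rule tri_help) (metis S(7) S(12) add.commute)
  show "m1 *\<^sub>R (e31 - e12) = (m3 - m2) *\<^sub>R e32"
    by (rule tri_help) (metis S(6) S(2) add.commute)
  show "m1 *\<^sub>R (phi F e31 - phi F e12) = (m3 - m2) *\<^sub>R phi F e32"
    by (rule tri_help) (metis S(12) S(8) add.commute)
  show "m3 *\<^sub>R (e32 - e13) = (m2 - m1) *\<^sub>R e12"
    by (rule tri_help2) (metis S(2) S(4) add.commute)
  show "m3 *\<^sub>R (phi F e32 - phi F e13) = (m2 - m1) *\<^sub>R phi F e12"
    by (rule tri_help2) (metis S(8) S(10) add.commute)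
  show "m2 *\<^sub>R (e12 - e23) = (m1 - m3) *\<^sub>R e13"
    by (rule tri_help) (metis S(4) S(3) add.commute)
  show "m2 *\<^sub>R (phi F e12 - phi F e23) = (m1 - m3) *\<^sub>R phi F e13"
    by (rule tri_help) (metis S(10) S(9) add.commute)
  show "m1 *\<^sub>R (e13 - e21) = (m3 - m2) *\<^sub>R e23"
    by (rule tri_help) (metis S(3) S(5) add.commute)
  show "m1 *\<^sub>R (phi F e13 - phi F e21) = (m3 - m2) *\<^sub>R phi F e23"
    by (rule tri_help) (metis S(9) S(11) add.commute)
  show "m3 *\<^sub>R (e23 - e31) = (m2 - m1) *\<^sub>R e21"
    by (rule tri_help2) (metis S(5) S(1) add.commute)
  show "m3 *\<^sub>R (phi F e23 - phi F e31) = (m2 - m1) *\<^sub>R phi F e21"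
    by (rule tri_help2) (metis S(11) S(7) add.commute)
qed

lemma per_nat:
  assumes "\<forall>t. g (t + T) = g t"
  shows "g (t + real n * T) = g t"
proof (induction n arbitrary: t)
  case 0 then show ?case by simp
next
  case (Suc n)
  have "g (t + real (Suc n) * T) = g ((t + real n * T) + T)" by (simp add: algebra_simps)
  also have "\<dots> = g (t + real n * T)" using assms by simp
  finally show ?case using Suc by simp
qed

lemma per_int:
  assumes "\<forall>t. g (t + T) = g t"
  shows "g (t + real_of_int n * T) = g t"
proof (cases "n \<ge> 0")
  case True
  then obtain k where "n = int k" by (metis nonneg_eq_int)
  then show ?thesis using per_nat[OF assms] by simp
next
  case False
  then obtain k where k: "n = - int k" by (metis linorder_le_less_linear neg_int_cases order_less_imp_le)
  have "g t = g ((t + real_of_int n * T) + real k * T)" using k by simp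
  also have "\<dots> = g (t + real_of_int n * T)" by (rule per_nat[OF assms])
  finally show ?thesis by simp
qed

lemma per_max:
  fixes g :: "real \<Rightarrow> real"
  assumes c: "continuous_on UNIV g" and T: "T > 0" and p: "\<forall>t. g (t + T) = g t"
  shows "\<exists>s0. \<forall>s. g s \<le> g s0"
proof -
  have "compact {0..T}" by simp
  moreover have "{0..T} \<noteq> {}" using T by simp
  moreover have "continuous_on {0..T} g" using c by (rule continuous_on_subset) simp
  ultimately obtain s0 where s0: "s0 \<in> {0..T}" "\<forall>x\<in>{0..T}. g x \<le> g s0"
    using continuous_attains_sup by blast
  have "g s \<le> g s0" for s
  proof -
    define n where "n = \<lfloor>s / T\<rfloor>"
    define s' where "s' = s - real_of_int n * T"
    have "real_of_int n \<le> s / T" "s / T < real_of_int n + 1" unfolding n_def by linarith+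
    then have "real_of_int n * T \<le> s" "s < (real_of_int n + 1) * T" using T
      by (simp_all add: pos_le_divide_eq pos_divide_less_eq)
    then have "s' \<in> {0..T}" unfolding s'_def by (simp add: algebra_simps)
    moreover have "g s = g s'" using per_int[OF p, of s' n] unfolding s'_def by simp
    ultimately show ?thesis using s0 by simp
  qed
  then show ?thesis by blast
qed

lemma per_min:
  fixes g :: "real \<Rightarrow> real"
  assumes c: "continuous_on UNIV g" and T: "T > 0" and p: "\<forall>t. g (t + T) = g t"
  shows "\<exists>s0. \<forall>s. g s0 \<le> g s"
proof -
  have "continuous_on UNIV (\<lambda>t. - g t)" using c by (intro continuous_intros)
  from per_max[OF this T] p obtain s0 where "\<forall>s. - g s \<le> - g s0" by auto
  then show ?thesis by auto
qed

lemma equi_alg: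
  fixes x y :: "real^2"
  assumes "x \<bullet> x = R\<^sup>2" "y \<bullet> y = R\<^sup>2" "(y - x) \<bullet> (y - x) = R\<^sup>2"
  shows "(p *\<^sub>R x + q *\<^sub>R y) \<bullet> (p *\<^sub>R x + q *\<^sub>R y) = R\<^sup>2 * (p\<^sup>2 + q\<^sup>2 + p * q)"
    and "(p *\<^sub>R (- x) + q *\<^sub>R (y - x)) \<bullet> (p *\<^sub>R (- x) + q *\<^sub>R (y - x)) = R\<^sup>2 * (p\<^sup>2 + q\<^sup>2 + p * q)"
proof -
  have xy: "x \<bullet> y = R\<^sup>2 / 2"
    using assms by (simp add: inner_diff_left inner_diff_right inner_commute)
  show "(p *\<^sub>R x + q *\<^sub>R y) \<bullet> (p *\<^sub>R x + q *\<^sub>R y) = R\<^sup>2 * (p\<^sup>2 + q\<^sup>2 + p * q)"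
    using assms(1,2) xy by (simp add: inner_add_left inner_add_right inner_commute power2_eq_square algebra_simps)
  show "(p *\<^sub>R (- x) + q *\<^sub>R (y - x)) \<bullet> (p *\<^sub>R (- x) + q *\<^sub>R (y - x)) = R\<^sup>2 * (p\<^sup>2 + q\<^sup>2 + p * q)"
    using assms(1,2) xy by (simp add: inner_add_left inner_add_right inner_diff_left inner_diff_right inner_commute power2_eq_square algebra_simps)
qed

lemma eq_all:
  assumes h: "hyps F P A m1 m2 m3 H1 H2 H3 c T"
    and eqs: "\<forall>s. norm (ee P s (H2 - H1)) = norm (ee P s (H3 - H1)) \<and>
                  norm (ee P s (H3 - H2)) = norm (ee P s (H1 - H2))"
  shows "m1 = m2"
proof -
  note hd = hypsD[OF h]
  define a where "a = H2 - H1"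
  define M where "M = m1 + m2 + m3"
  define psi where "psi s = (c - M *\<^sub>R P s) \<bullet> (c - M *\<^sub>R P s)" for s
  define Q1 where "Q1 = m2\<^sup>2 + m3\<^sup>2 + m2 * m3"
  define Q2 where "Q2 = m1\<^sup>2 + m3\<^sup>2 + m1 * m3"
  have key: "psi s = (norm (ee P s a))\<^sup>2 * Q1 \<and> psi (s + a) = (norm (ee P s a))\<^sup>2 * Q2" for s
  proof -
    define x where "x = ee P s a"
    define y where "y = ee P s (H3 - H1)"
    have a1: "s + a + (H3 - H2) = s + (H3 - H1)" unfolding a_def by simp
    have a2: "s + a + (H1 - H2) = s" unfolding a_def by simp
    have yx: "ee P (s + a) (H3 - H2) = y - x" unfolding ee_def x_def y_def a1 by (simp add: ee_def)
    have mx: "ee P (s + a) (H1 - H2) = - x" unfolding ee_def x_def a2 by (simp add: ee_def)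
    have nx: "x \<bullet> x = (norm x)\<^sup>2" by (simp add: power2_norm_eq_inner)
    have ny: "y \<bullet> y = (norm x)\<^sup>2" using eqs[rule_format, of s] unfolding x_def y_def a_def
      by (simp add: power2_norm_eq_inner)
    have "norm (y - x) = norm x" using eqs[rule_format, of "s + a"] yx mx by simp
    then have nyx: "(y - x) \<bullet> (y - x) = (norm x)\<^sup>2" by (metis power2_norm_eq_inner)
    have s1: "m2 *\<^sub>R x + m3 *\<^sub>R y = c - M *\<^sub>R P s"
      using six(1)[OF h, of s] unfolding x_def y_def a_def M_def .
    have s2: "m1 *\<^sub>R (- x) + m3 *\<^sub>R (y - x) = c - M *\<^sub>R P (s + a)"
      using six(2)[OF h, of "s + a"] yx mx unfolding M_def by simp
    show ?thesis
      using equi_alg[OF nx ny nyx, of m2 m3] equi_alg[OF nx ny nyx, of m1 m3] s1 s2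
      unfolding psi_def Q1_def Q2_def x_def by (simp add: mult.commute)
  qed
  have cpsi: "continuous_on UNIV psi" unfolding psi_def
    using hd(6) by (intro continuous_intros) auto
  have ppsi: "\<forall>t. psi (t + T) = psi t" unfolding psi_def using hd(8) by simp
  obtain s0 where s0: "\<forall>s. psi s \<le> psi s0" using per_max[OF cpsi hd(7) ppsi] by blast
  have Q1p: "Q1 > 0" "Q2 > 0" unfolding Q1_def Q2_def using hd(1-3) by (simp_all add: add_pos_pos)
  have R0: "(norm (ee P s0 a))\<^sup>2 > 0" using ee_nz(1)[OF h, of s0] unfolding a_def by simp
  have "Q1 = Q2"
  proof (rule ccontr)
    assume "Q1 \<noteq> Q2"
    then consider "Q1 < Q2" | "Q2 < Q1" by linarith
    then show False
    proof cases
      case 1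
      have "psi (s0 + a) = (norm (ee P s0 a))\<^sup>2 * Q2" using key by blast
      also have "\<dots> > (norm (ee P s0 a))\<^sup>2 * Q1" using 1 R0 by simp
      also have "(norm (ee P s0 a))\<^sup>2 * Q1 = psi s0" using key by simp
      finally show False using s0 by (meson not_le)
    next
      case 2
      define r where "r = (norm (ee P (s0 - a) a))\<^sup>2"
      have r0: "r > 0" using ee_nz(1)[OF h, of "s0 - a"] unfolding a_def r_def by simp
      have k: "psi (s0 - a) = r * Q1" "psi s0 = r * Q2" using key[of "s0 - a"] unfolding r_def by simp_all
      have "psi s0 < psi (s0 - a)" using k 2 r0 by simp
      then show False using s0 by (meson not_le)
    qed
  qed
  then have "(m2 - m1) * (m1 + m2 + m3) = 0" unfolding Q1_def Q2_def by (simp add: power2_eq_square algebra_simps)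
  then show ?thesis using hd(1-3) by simp
qed

definition det2 :: "real^2 \<Rightarrow> real^2 \<Rightarrow> real" where
  "det2 u v = u$1 * v$2 - u$2 * v$1"

lemma det2_par: assumes "det2 u v = 0" "u \<noteq> 0" shows "\<exists>k. v = k *\<^sub>R u"
proof (cases "u$1 = 0")
  case True
  then have u2: "u$2 \<noteq> 0" using assms(2) by (metis exhaust_2 vec_eq_iff zero_index)
  have "v$1 = 0" using assms(1) True u2 by (simp add: det2_def)
  then have "v = (v$2 / u$2) *\<^sub>R u" using True u2 by (simp add: vec_eq_iff forall_2)
  then show ?thesis by blast
next
  case False
  have "u$1 * v$2 = u$2 * v$1" using assms(1) by (simp add: det2_def)
  then have "v$2 = (v$1 / u$1) * u$2" using False by (simp add: field_simps)
  then have "v = (v$1 / u$1) *\<^sub>R u" using False by (simp add: vec_eq_iff forall_2)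
  then show ?thesis by blast
qed

lemma det2_scale: "det2 (a *\<^sub>R w) (b *\<^sub>R w) = 0"
  by (simp add: det2_def)

lemma cont_ee:
  assumes "continuous_on UNIV P"
  shows "continuous_on UNIV (\<lambda>s. ee P s d)"
proof -
  have "continuous_on UNIV (\<lambda>s. P (s + d))"
    by (rule continuous_on_compose2[OF assms]) (auto intro!: continuous_intros)
  then show ?thesis unfolding ee_def using assms by (intro continuous_intros) auto
qed

lemma branch_phi:
  fixes F :: "real \<Rightarrow> real" and u v w :: "real^2"
  assumes Fp: "\<forall>x>0. F x > 0"
    and Fd: "\<forall>x y. 0 < x \<longrightarrow> x < y \<longrightarrow> sqrt y * F y < sqrt x * F x"
    and nz: "u \<noteq> 0" "v \<noteq> 0" "w \<noteq> 0" and m: "m \<noteq> 0" and k: "k \<noteq> 0"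
    and e1: "m *\<^sub>R (u - w) = k *\<^sub>R v"
    and e2: "m *\<^sub>R (phi F u - phi F w) = k *\<^sub>R phi F v"
  shows "(norm u = norm v \<and> norm v = norm w) \<or>
         ((\<exists>l<0. u = l *\<^sub>R w) \<and> (\<exists>l. v = l *\<^sub>R w) \<and>
          ((norm u < norm v \<and> norm v < norm w) \<or> (norm w < norm v \<and> norm v < norm u)))"
  by (rule branch[OF Fp Fd nz m k e1 e2[unfolded phi_def]])

lemma two_equal:
  assumes h: "hyps F P A m1 m2 m3 H1 H2 H3 c T" and m13: "m1 = m3" and m12: "m2 \<noteq> m1"
  shows False
proof -
  note hd = hypsD[OF h]
  define Eqs where "Eqs s \<longleftrightarrow> norm (ee P s (H2 - H1)) = norm (ee P s (H3 - H1)) \<and>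
     norm (ee P s (H3 - H2)) = norm (ee P s (H1 - H2)) \<and> norm (ee P s (H2 - H1)) = norm (ee P s (H1 - H2))" for s
  define Col where "Col s \<longleftrightarrow> det2 (ee P s (H2 - H1)) (ee P s (H1 - H2)) = 0" for s
  have pw: "(Eqs s \<or> (Col s \<and> norm (ee P s (H2 - H1)) \<noteq> norm (ee P s (H1 - H2)))) \<and> \<not> (Eqs s \<and> Col s)" for s
  proof -
    define e21 where "e21 = ee P s (H2 - H1)"
    define e31 where "e31 = ee P s (H3 - H1)"
    define e12 where "e12 = ee P s (H1 - H2)"
    define e32 where "e32 = ee P s (H3 - H2)"
    define e13 where "e13 = ee P s (H1 - H3)"
    define e23 where "e23 = ee P s (H2 - H3)"
    note TR = triples[OF h, of s, folded e21_def e31_def e12_def e32_def e13_def e23_def]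
    note NZ = ee_nz[OF h, of s, folded e21_def e31_def e12_def e32_def e13_def e23_def]
    have e32: "e32 = e21" using TR(1) m13 hd(2) by simp
    have e23: "e23 = e12" using TR(7) m13 hd(2) by simp
    have t21a: "m3 *\<^sub>R (e12 - e31) = (m2 - m1) *\<^sub>R e21" using TR(11) e23 by simp
    have t21b: "m3 *\<^sub>R (phi F e12 - phi F e31) = (m2 - m1) *\<^sub>R phi F e21" using TR(12) e23 by simp
    have B: "(norm e12 = norm e21 \<and> norm e21 = norm e31) \<or>
         ((\<exists>l<0. e12 = l *\<^sub>R e31) \<and> (\<exists>l. e21 = l *\<^sub>R e31) \<and>
          ((norm e12 < norm e21 \<and> norm e21 < norm e31) \<or> (norm e31 < norm e21 \<and> norm e21 < norm e12)))"
      by (rule branch_phi[OF hd(4) hd(5) NZ(3) NZ(1) NZ(2) _ _ t21a t21b]) (use hd(3) m12 in auto)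
    have ne: "e12 \<noteq> e21"
    proof -
      have "P (s - H2 + H1) \<noteq> P (s - H2 + H3)" using hd(16) by blast
      then have "e12 \<noteq> e32" unfolding e12_def e32_def ee_def by (simp add: algebra_simps)
      then show ?thesis using e32 by simp
    qed
    have eqs_iff: "Eqs s \<longleftrightarrow> norm e21 = norm e31 \<and> norm e21 = norm e12"
      unfolding Eqs_def by (fold e21_def e31_def e12_def e32_def) (auto simp: e32)
    have col_iff: "Col s \<longleftrightarrow> det2 e21 e12 = 0" unfolding Col_def e21_def e12_def ..
    have part1: "Eqs s \<or> (Col s \<and> norm e21 \<noteq> norm e12)"
      using B
    proof
      assume "norm e12 = norm e21 \<and> norm e21 = norm e31"
      then show ?thesis using eqs_iff by simp
    next
      assume a: "(\<exists>l<0. e12 = l *\<^sub>R e31) \<and> (\<exists>l. e21 = l *\<^sub>R e31) \<and>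
          ((norm e12 < norm e21 \<and> norm e21 < norm e31) \<or> (norm e31 < norm e21 \<and> norm e21 < norm e12))"
      then obtain l1 l2 where "e12 = l1 *\<^sub>R e31" "e21 = l2 *\<^sub>R e31" by blast
      then have "det2 e21 e12 = 0" using det2_scale by simp
      moreover have "norm e21 \<noteq> norm e12" using a by auto
      ultimately show ?thesis using col_iff by simp
    qed
    have part2: "\<not> (Eqs s \<and> Col s)"
    proof
      assume a: "Eqs s \<and> Col s"
      then obtain k where k: "e12 = k *\<^sub>R e21" using det2_par NZ(1) col_iff by blast
      have n: "norm e21 = norm e31" "norm e21 = norm e12" using a eqs_iff by auto
      have k1: "norm e12 = \<bar>k\<bar> * norm e21" using k by simp
      have ne0: "norm e21 \<noteq> 0" using NZ(1) by simp
      have "\<bar>k\<bar> * norm e21 = 1 * norm e21" using k1 n(2) by linarith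
      then have "\<bar>k\<bar> = 1" using mult_right_cancel[OF ne0] by blast
      moreover have "k \<noteq> 1" using k ne by auto
      ultimately have "k = -1" by linarith
      then have "e12 = - e21" using k by simp
      then have "m3 *\<^sub>R e31 = - (m3 + m2 - m1) *\<^sub>R e21" using t21a by (simp add: algebra_simps)
      then have X: "m3 *\<^sub>R e31 = (- m2) *\<^sub>R e21" using m13 by simp
      have "m3 * norm e31 = m2 * norm e21" using arg_cong[OF X, of norm] hd(2,3) by simp
      then have "m3 * norm e21 = m2 * norm e21" using n(1) by simp
      then have "m3 = m2" using mult_right_cancel[OF ne0] by blast
      then show False using m12 m13 by simp
    qed
    show ?thesis using part1 part2 unfolding e21_def e12_def by blast
  qed
  have cE: "closed {s. Eqs s}" unfolding Eqs_def
    using hd(6) by (intro closed_Collect_conj closed_Collect_eq continuous_intros cont_ee)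
  have cC: "closed {s. Col s}" unfolding Col_def det2_def
    using hd(6) by (intro closed_Collect_eq continuous_intros cont_ee)
  have "connected (UNIV :: real set)" by simp
  then have "{s. Eqs s} = {} \<or> {s. Col s} = {}"
    unfolding connected_closed using cE cC pw by blast
  then show False
  proof
    assume "{s. Col s} = {}"
    then have "\<forall>s. Eqs s" using pw by blast
    then have "m1 = m2" using eq_all[OF h] unfolding Eqs_def by blast
    then show False using m12 by simp
  next
    assume "{s. Eqs s} = {}"
    then have ne: "\<forall>s. norm (ee P s (H2 - H1)) \<noteq> norm (ee P s (H1 - H2))" using pw by blast
    define a where "a = H2 - H1"
    define rho where "rho s = norm (ee P s a)" for s
    have rr: "norm (ee P s (H1 - H2)) = rho (s - a)" for s
      unfolding rho_def a_def ee_def by (simp add: norm_minus_commute algebra_simps)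
    define hh where "hh s = rho s - rho (s - a)" for s
    have hne: "hh s \<noteq> 0" for s using ne rr unfolding hh_def rho_def a_def by force
    have crho: "continuous_on UNIV rho" unfolding rho_def
      using cont_ee[OF hd(6)] by (intro continuous_intros) auto
    have chh: "continuous_on UNIV hh" unfolding hh_def
      by (intro continuous_intros continuous_on_compose2[OF crho]) auto
    have prho: "\<forall>t. rho (t + T) = rho t" unfolding rho_def ee_def using hd(8)
      by (metis add.commute add.left_commute)
    obtain s1 where s1: "\<forall>s. rho s \<le> rho s1" using per_max[OF crho hd(7) prho] by blast
    obtain s2 where s2: "\<forall>s. rho s2 \<le> rho s" using per_min[OF crho hd(7) prho] by blast
    have h1: "hh (s1 + a) \<le> 0" using s1 unfolding hh_def by simp
    have h2: "hh (s2 + a) \<ge> 0" using s2 unfolding hh_def by simp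
    have "\<exists>x. hh x = 0"
    proof (cases "s1 + a \<le> s2 + a")
      case True
      then show ?thesis using IVT'[of hh "s1 + a" 0 "s2 + a"] h1 h2 continuous_on_subset[OF chh] by blast
    next
      case False
      then show ?thesis using IVT2'[of hh "s1 + a" 0 "s2 + a"] h1 h2 continuous_on_subset[OF chh] by force
    qed
    then show False using hne by blast
  qed
qed

lemma branch_cor:
  assumes "(norm u = norm v \<and> norm v = norm w) \<or>
         ((\<exists>l<0. u = l *\<^sub>R w) \<and> (\<exists>l. v = l *\<^sub>R w) \<and>
          ((norm u < norm v \<and> norm v < norm w) \<or> (norm w < norm v \<and> norm v < norm (u::real^2))))"
  shows "norm u = norm v \<or> norm v = norm w \<or> norm u = norm w \<Longrightarrow> norm u = norm v \<and> norm v = norm w"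
  using assms by auto

lemma distinct_case:
  assumes h: "hyps F P A m1 m2 m3 H1 H2 H3 c T" and d: "m1 \<noteq> m2" "m2 \<noteq> m3" "m1 \<noteq> m3"
  shows False
proof -
  note hd = hypsD[OF h]
  have pw: "norm (ee P s (H2 - H1)) = norm (ee P s (H3 - H1)) \<and>
            norm (ee P s (H3 - H2)) = norm (ee P s (H1 - H2))" for s
  proof -
    define e21 where "e21 = ee P s (H2 - H1)"
    define e31 where "e31 = ee P s (H3 - H1)"
    define e12 where "e12 = ee P s (H1 - H2)"
    define e32 where "e32 = ee P s (H3 - H2)"
    define e13 where "e13 = ee P s (H1 - H3)"
    define e23 where "e23 = ee P s (H2 - H3)"
    note TR = triples[OF h, of s, folded e21_def e31_def e12_def e32_def e13_def e23_def]
    note NZ = ee_nz[OF h, of s, folded e21_def e31_def e12_def e32_def e13_def e23_def]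
    have k1: "m1 - m3 \<noteq> 0" "m3 - m2 \<noteq> 0" "m2 - m1 \<noteq> 0" using d by auto
    have m0: "m1 \<noteq> 0" "m2 \<noteq> 0" "m3 \<noteq> 0" using hd(1-3) by auto
    note BP = branch_phi[OF hd(4) hd(5)]
    have B1: "(norm e21 = norm e31 \<and> norm e31 = norm e32) \<or>
         ((\<exists>l<0. e21 = l *\<^sub>R e32) \<and> (\<exists>l. e31 = l *\<^sub>R e32) \<and>
          ((norm e21 < norm e31 \<and> norm e31 < norm e32) \<or> (norm e32 < norm e31 \<and> norm e31 < norm e21)))"
      by (rule BP[OF NZ(1) NZ(2) NZ(4) m0(2) k1(1) TR(1) TR(2)])
    have B2: "(norm e31 = norm e32 \<and> norm e32 = norm e12) \<or>
         ((\<exists>l<0. e31 = l *\<^sub>R e12) \<and> (\<exists>l. e32 = l *\<^sub>R e12) \<and>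
          ((norm e31 < norm e32 \<and> norm e32 < norm e12) \<or> (norm e12 < norm e32 \<and> norm e32 < norm e31)))"
      by (rule BP[OF NZ(2) NZ(4) NZ(3) m0(1) k1(2) TR(3) TR(4)])
    have B3: "(norm e32 = norm e12 \<and> norm e12 = norm e13) \<or>
         ((\<exists>l<0. e32 = l *\<^sub>R e13) \<and> (\<exists>l. e12 = l *\<^sub>R e13) \<and>
          ((norm e32 < norm e12 \<and> norm e12 < norm e13) \<or> (norm e13 < norm e12 \<and> norm e12 < norm e32)))"
      by (rule BP[OF NZ(4) NZ(3) NZ(5) m0(3) k1(3) TR(5) TR(6)])
    have B4: "(norm e12 = norm e13 \<and> norm e13 = norm e23) \<or>
         ((\<exists>l<0. e12 = l *\<^sub>R e23) \<and> (\<exists>l. e13 = l *\<^sub>R e23) \<and>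
          ((norm e12 < norm e13 \<and> norm e13 < norm e23) \<or> (norm e23 < norm e13 \<and> norm e13 < norm e12)))"
      by (rule BP[OF NZ(3) NZ(5) NZ(6) m0(2) k1(1) TR(7) TR(8)])
    have B5: "(norm e13 = norm e23 \<and> norm e23 = norm e21) \<or>
         ((\<exists>l<0. e13 = l *\<^sub>R e21) \<and> (\<exists>l. e23 = l *\<^sub>R e21) \<and>
          ((norm e13 < norm e23 \<and> norm e23 < norm e21) \<or> (norm e21 < norm e23 \<and> norm e23 < norm e13)))"
      by (rule BP[OF NZ(5) NZ(6) NZ(1) m0(1) k1(2) TR(9) TR(10)])
    have B6: "(norm e23 = norm e21 \<and> norm e21 = norm e31) \<or>
         ((\<exists>l<0. e23 = l *\<^sub>R e31) \<and> (\<exists>l. e21 = l *\<^sub>R e31) \<and>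
          ((norm e23 < norm e21 \<and> norm e21 < norm e31) \<or> (norm e31 < norm e21 \<and> norm e21 < norm e23)))"
      by (rule BP[OF NZ(6) NZ(1) NZ(2) m0(3) k1(3) TR(11) TR(12)])
    note C1 = branch_cor[OF B1] and C2 = branch_cor[OF B2] and C3 = branch_cor[OF B3]
      and C4 = branch_cor[OF B4] and C5 = branch_cor[OF B5] and C6 = branch_cor[OF B6]
    have one: "(norm e21 = norm e31 \<and> norm e31 = norm e32) \<or> (norm e32 = norm e12 \<and> norm e12 = norm e13)
      \<or> (norm e13 = norm e23 \<and> norm e23 = norm e21)"
    proof (rule ccontr)
      assume na: "\<not> ?thesis"
      have "\<not> (norm e21 = norm e31 \<and> norm e31 = norm e32)" using na by blast
      then obtain l1 where "l1 < 0" "e21 = l1 *\<^sub>R e32" using B1 by blast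
      have "\<not> (norm e32 = norm e12 \<and> norm e12 = norm e13)" using na by blast
      then obtain l2 where "l2 < 0" "e32 = l2 *\<^sub>R e13" using B3 by blast
      have "\<not> (norm e13 = norm e23 \<and> norm e23 = norm e21)" using na by blast
      then obtain l3 where "l3 < 0" "e13 = l3 *\<^sub>R e21" using B5 by blast
      note l = \<open>l1 < 0\<close> \<open>e21 = l1 *\<^sub>R e32\<close> \<open>l2 < 0\<close> \<open>e32 = l2 *\<^sub>R e13\<close> \<open>l3 < 0\<close> \<open>e13 = l3 *\<^sub>R e21\<close>
      have "e21 = l1 *\<^sub>R (l2 *\<^sub>R (l3 *\<^sub>R e21))" using l(2,4,6) by metis
      then have "e21 = (l1 * l2 * l3) *\<^sub>R e21" by (simp add: mult.assoc)
      then have "(1 - l1 * l2 * l3) *\<^sub>R e21 = 0" by (simp add: algebra_simps)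
      moreover have "l1 * l2 * l3 < 0" using l by (simp add: mult_pos_neg mult_neg_neg)
      ultimately show False using NZ(1) by simp
    qed
    have "norm e21 = norm e31 \<and> norm e32 = norm e12"
      using one
    proof (elim disjE)
      assume a: "norm e21 = norm e31 \<and> norm e31 = norm e32"
      then have "norm e32 = norm e12" using C2 by blast
      then show ?thesis using a by simp
    next
      assume a: "norm e32 = norm e12 \<and> norm e12 = norm e13"
      then have "norm e13 = norm e23" using C4 by blast
      then have "norm e23 = norm e21" using C5 by blast
      then have "norm e21 = norm e31" using C6 by blast
      then show ?thesis using a by simp
    next
      assume a: "norm e13 = norm e23 \<and> norm e23 = norm e21"
      then have "norm e21 = norm e31" using C6 by blast
      then have "norm e31 = norm e32" using C1 by blast
      then have "norm e32 = norm e12" using C2 by blast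
      then show ?thesis using \<open>norm e21 = norm e31\<close> by simp
    qed
    then show ?thesis unfolding e21_def e31_def e32_def e12_def .
  qed
  have "m1 = m2" using eq_all[OF h] pw by blast
  then show False using d by simp
qed

lemma core:
  assumes h: "hyps F P A m1 m2 m3 H1 H2 H3 c T"
  shows "m1 = m2 \<and> m2 = m3"
proof (rule ccontr)
  assume na: "\<not> (m1 = m2 \<and> m2 = m3)"
  consider "m1 = m3" "m2 \<noteq> m1" | "m1 = m2" "m3 \<noteq> m1" | "m2 = m3" "m1 \<noteq> m2"
    | "m1 \<noteq> m2" "m2 \<noteq> m3" "m1 \<noteq> m3" using na by blast
  then show False
  proof cases
    case 1 then show ?thesis using two_equal[OF h] by blast
  next
    case 2 then show ?thesis using two_equal[OF hyps_swap23[OF h]] by simp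
  next
    case 3 then show ?thesis using two_equal[OF hyps_swap12[OF h]] by simp
  next
    case 4 then show ?thesis using distinct_case[OF h] by blast
  qed
qed

lemma shift_vd:
  assumes "\<forall>t. (f has_vector_derivative f' t) (at t)"
  shows "((\<lambda>t. f (t + c)) has_vector_derivative f' (x + c)) (at x)"
proof -
  have d: "((\<lambda>t. t + c) has_vector_derivative 1) (at x)"
    using has_vector_derivative_add[OF has_vector_derivative_id has_vector_derivative_const] by simp
  have "((f \<circ> (\<lambda>t. t + c)) has_vector_derivative 1 *\<^sub>R f' (x + c)) (at x)"
    by (rule vector_diff_chain_at[OF d]) (use assms in simp)
  then show ?thesis by (simp add: o_def)
qed

lemma neg_vd:
  assumes "\<forall>t. (f has_vector_derivative f' t) (at t)"
  shows "((\<lambda>t. f (- t)) has_vector_derivative - f' (- x)) (at x)"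
proof -
  have d: "((\<lambda>t. - t) has_vector_derivative -1) (at x)"
    using has_vector_derivative_minus[OF has_vector_derivative_id] by simp
  have "((f \<circ> (\<lambda>t. - t)) has_vector_derivative (-1) *\<^sub>R f' (- x)) (at x)"
    by (rule vector_diff_chain_at[OF d]) (use assms in simp)
  then show ?thesis by (simp add: o_def)
qed

theorem theorem2:
  fixes m :: "nat \<Rightarrow> real" and q v a :: "nat \<Rightarrow> real \<Rightarrow> real^2" and f :: "real \<Rightarrow> real"
  assumes m_pos: "\<forall>k\<in>{1,2,3}. m k > 0"
    and f_pos: "\<forall>x>0. f x > 0"
    and f_dec: "\<forall>x y. 0 < x \<longrightarrow> x < y \<longrightarrow> sqrt y * f y < sqrt x * f x"
    and no_collision: "\<forall>j\<in>{1,2,3}. \<forall>k\<in>{1,2,3}. j \<noteq> k \<longrightarrow> (\<forall>t. q j t \<noteq> q k t)"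
    and vel: "\<forall>k\<in>{1,2,3}. \<forall>t. (q k has_vector_derivative v k t) (at t)"
    and acc: "\<forall>k\<in>{1,2,3}. \<forall>t. (v k has_vector_derivative a k t) (at t)"
    and eqn: "\<forall>k\<in>{1,2,3}. \<forall>t. a k t =
               (\<Sum>j\<in>{1,2,3} - {k}. (m j * f ((norm (q j t - q k t))\<^sup>2)) *\<^sub>R (q j t - q k t))"
    and com: "\<forall>t. (\<Sum>k\<in>{1,2,3}. m k *\<^sub>R q k t) = 0"
    and choreo: "choreographic q p"
    and sym: "axis_symmetric p"
  shows "m 1 = m 2 \<and> m 2 = m 3"
proof -
  obtain p' p'' T where T: "T > 0" and per: "\<forall>t. p (t + T) = p t"
    and dp: "\<forall>t. (p has_vector_derivative p' t) (at t)"
    and dp2: "\<forall>t. (p' has_vector_derivative p'' t) (at t)"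
    using choreo unfolding choreographic_def C2_periodic_def by blast
  obtain h where hq: "\<forall>k\<in>{1,2,3}. \<forall>t. q k t = p (t + h k)"
    using choreo unfolding choreographic_def by blast
  obtain g s0 where iso: "\<forall>x y. dist (g x) (g y) = dist x y"
    and gs: "\<forall>t. g (p (- t + s0)) = refl_axis (g (p (t + s0)))"
    using sym unfolding axis_symmetric_def by blast
  define L where "L x = g x - g 0" for x
  have Liso: "\<forall>x y. dist (L x) (L y) = dist x y"
  proof (intro allI)
    fix x y
    have "g x - g 0 - (g y - g 0) = g x - g y" by (simp add: algebra_simps)
    then show "dist (L x) (L y) = dist x y" using iso by (simp add: L_def dist_norm)
  qed
  have L0: "L 0 = 0" by (simp add: L_def)
  have linL: "linear L" by (rule isometry_linear[OF L0 Liso])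
  have blL: "bounded_linear L" using linL linear_conv_bounded_linear by blast
  have nL: "norm (L x) = norm x" for x
    using Liso[rule_format, of x 0] linear_0[OF linL] by (simp add: dist_norm)
  have gL: "L x + g 0 = g x" for x by (simp add: L_def)
  have ginj: "g x = g y \<Longrightarrow> x = y" for x y using iso by (metis dist_eq_0_iff)
  define P where "P t = g (p (t + s0))" for t
  define V where "V t = L (p' (t + s0))" for t
  define A where "A t = L (p'' (t + s0))" for t
  define H where "H k = h k - s0" for k
  define c where "c = (m 1 + m 2 + m 3) *\<^sub>R g 0"
  have Pfun: "P = (\<lambda>t. L (p (t + s0)) + g 0)" by (simp add: P_def gL fun_eq_iff)
  have dP: "(P has_vector_derivative V t) (at t)" for t
  proof -
    have "((\<lambda>t. L (p (t + s0))) has_vector_derivative L (p' (t + s0))) (at t)"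
      by (rule bounded_linear.has_vector_derivative[OF blL shift_vd[OF dp]])
    then have "((\<lambda>t. L (p (t + s0)) + g 0) has_vector_derivative L (p' (t + s0))) (at t)"
      by (simp add: has_vector_derivative_add_const)
    then show ?thesis unfolding Pfun V_def .
  qed
  have dV: "(V has_vector_derivative A t) (at t)" for t
  proof -
    have "((\<lambda>t. L (p' (t + s0))) has_vector_derivative L (p'' (t + s0))) (at t)"
      by (rule bounded_linear.has_vector_derivative[OF blL shift_vd[OF dp2]])
    then show ?thesis unfolding V_def A_def .
  qed
  have refP: "P (- t) = refl_axis (P t)" for t using gs by (simp add: P_def)
  have refV: "- V (- t) = refl_axis (V t)" for t
  proof -
    have e1: "(\<lambda>t. P (- t)) = (\<lambda>t. refl_axis (P t))" using refP by auto
    have d1: "((\<lambda>t. P (- t)) has_vector_derivative - V (- t)) (at t)"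
      by (rule neg_vd) (use dP in auto)
    have d2: "((\<lambda>t. refl_axis (P t)) has_vector_derivative refl_axis (V t)) (at t)"
      by (rule bounded_linear.has_vector_derivative[OF R_bl dP])
    show ?thesis using vector_derivative_unique_at[OF d1[unfolded e1] d2] .
  qed
  have refA: "A (- t) = refl_axis (A t)" for t
  proof -
    have e1: "(\<lambda>t. - V (- t)) = (\<lambda>t. refl_axis (V t))" using refV by auto
    have "((\<lambda>t. V (- t)) has_vector_derivative - A (- t)) (at t)"
      by (rule neg_vd) (use dV in auto)
    then have d1: "((\<lambda>t. - V (- t)) has_vector_derivative A (- t)) (at t)"
      using has_vector_derivative_minus by fastforce
    have d2: "((\<lambda>t. refl_axis (V t)) has_vector_derivative refl_axis (A t)) (at t)"
      by (rule bounded_linear.has_vector_derivative[OF R_bl dV])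
    show ?thesis using vector_derivative_unique_at[OF d1[unfolded e1] d2] .
  qed
  have ak: "a k t = p'' (t + h k)" if k: "k \<in> {1,2,3}" for k t
  proof -
    have qk: "q k = (\<lambda>t. p (t + h k))" using hq k by auto
    have vk: "v k s = p' (s + h k)" for s
      using vector_derivative_unique_at[OF vel[rule_format, OF k, of s, unfolded qk] shift_vd[OF dp]] .
    have "(v k has_vector_derivative p'' (t + h k)) (at t)"
      unfolding vk[abs_def] by (rule shift_vd[OF dp2])
    then show ?thesis using vector_derivative_unique_at acc k by blast
  qed
  have PH: "P (t + H k) = g (q k t)" if "k \<in> {1,2,3}" for k t
    using hq[rule_format, OF that, of t] by (simp add: P_def H_def)
  have Ldiff: "L (q j t - q k t) = P (t + H j) - P (t + H k)" if "j \<in> {1,2,3}" "k \<in> {1,2,3}" for j k t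
    using PH[OF that(1)] PH[OF that(2)] linear_diff[OF linL] by (simp add: L_def)
  have Ndiff: "norm (q j t - q k t) = norm (P (t + H j) - P (t + H k))" if "j \<in> {1,2,3}" "k \<in> {1,2,3}" for j k t
    using Ldiff[OF that] nL by metis
  have accP: "A (t + H k) = (\<Sum>j\<in>{1,2,3} - {k}. (m j * f ((norm (P (t + H j) - P (t + H k)))\<^sup>2)) *\<^sub>R (P (t + H j) - P (t + H k)))"
    if k: "k \<in> {1,2,3}" for k t
  proof -
    have "A (t + H k) = L (a k t)" using ak[OF k] by (simp add: A_def H_def)
    also have "\<dots> = (\<Sum>j\<in>{1,2,3} - {k}. L ((m j * f ((norm (q j t - q k t))\<^sup>2)) *\<^sub>R (q j t - q k t)))"
      unfolding eqn[rule_format, OF k, of t] by (rule linear_sum[OF linL])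
    also have "\<dots> = (\<Sum>j\<in>{1,2,3} - {k}. (m j * f ((norm (P (t + H j) - P (t + H k)))\<^sup>2)) *\<^sub>R (P (t + H j) - P (t + H k)))"
    proof (rule sum.cong)
      fix j assume "j \<in> {1,2,3} - {k}"
      then have j: "j \<in> {1,2,3}" by simp
      show "L ((m j * f ((norm (q j t - q k t))\<^sup>2)) *\<^sub>R (q j t - q k t)) =
            (m j * f ((norm (P (t + H j) - P (t + H k)))\<^sup>2)) *\<^sub>R (P (t + H j) - P (t + H k))"
        using linear_scale[OF linL] Ldiff[OF j k] Ndiff[OF j k] by simp
    qed simp
    finally show ?thesis .
  qed
  have s1: "{1,2,3} - {1::nat} = {2,3}" "{1,2,3} - {2::nat} = {1,3}" "{1,2,3} - {3::nat} = {1,2}" by auto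
  have mp: "m 1 > 0" "m 2 > 0" "m 3 > 0" using m_pos by auto
  have cP: "continuous_on UNIV P"
    by (rule continuous_at_imp_continuous_on) (use dP has_vector_derivative_continuous in blast)
  have pP: "\<forall>t. P (t + T) = P t"
  proof
    fix t
    have "p (t + T + s0) = p (t + s0)" using per by (metis add.commute add.left_commute)
    then show "P (t + T) = P t" by (simp add: P_def)
  qed
  have rP: "\<forall>t. P (- t) = refl_axis (P t)" using refP by blast
  have rA: "\<forall>t. A (- t) = refl_axis (A t)" using refA by blast
  have a1: "\<forall>t. A (t + H 1) = m 2 *\<^sub>R phi f (P (t + H 2) - P (t + H 1)) + m 3 *\<^sub>R phi f (P (t + H 3) - P (t + H 1))"
    using accP s1 by (simp add: phi_def)
  have a2: "\<forall>t. A (t + H 2) = m 1 *\<^sub>R phi f (P (t + H 1) - P (t + H 2)) + m 3 *\<^sub>R phi f (P (t + H 3) - P (t + H 2))"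
    using accP s1 by (simp add: phi_def)
  have a3: "\<forall>t. A (t + H 3) = m 1 *\<^sub>R phi f (P (t + H 1) - P (t + H 3)) + m 2 *\<^sub>R phi f (P (t + H 2) - P (t + H 3))"
    using accP s1 by (simp add: phi_def)
  have cm: "\<forall>t. m 1 *\<^sub>R P (t + H 1) + m 2 *\<^sub>R P (t + H 2) + m 3 *\<^sub>R P (t + H 3) = c"
  proof
    fix t
    have LP: "L (q k t) = P (t + H k) - g 0" if "k \<in> {1,2,3}" for k
      using PH[OF that] by (simp add: L_def)
    have "L (\<Sum>k\<in>{1,2,3}. m k *\<^sub>R q k t) = 0" using com linear_0[OF linL] by simp
    then have "m 1 *\<^sub>R L (q 1 t) + m 2 *\<^sub>R L (q 2 t) + m 3 *\<^sub>R L (q 3 t) = 0"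
      using linear_add[OF linL] linear_scale[OF linL] by (simp add: add.assoc)
    then have "m 1 *\<^sub>R (P (t + H 1) - g 0) + m 2 *\<^sub>R (P (t + H 2) - g 0) + m 3 *\<^sub>R (P (t + H 3) - g 0) = 0"
      using LP by simp
    then show "m 1 *\<^sub>R P (t + H 1) + m 2 *\<^sub>R P (t + H 2) + m 3 *\<^sub>R P (t + H 3) = c"
      unfolding c_def by (simp add: algebra_simps)
  qed
  have nc: "\<forall>t. P (t + H 1) \<noteq> P (t + H 2) \<and> P (t + H 1) \<noteq> P (t + H 3) \<and> P (t + H 2) \<noteq> P (t + H 3)"
  proof
    fix t
    have "q 1 t \<noteq> q 2 t" "q 1 t \<noteq> q 3 t" "q 2 t \<noteq> q 3 t" using no_collision by auto
    then show "P (t + H 1) \<noteq> P (t + H 2) \<and> P (t + H 1) \<noteq> P (t + H 3) \<and> P (t + H 2) \<noteq> P (t + H 3)"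
      using PH[of 1 t] PH[of 2 t] PH[of 3 t] ginj by auto
  qed
  have hy: "hyps f P A (m 1) (m 2) (m 3) (H 1) (H 2) (H 3) c T"
    unfolding hyps_def using mp f_pos f_dec cP T pP rP rA a1 a2 a3 cm nc by blast
  show ?thesis using core[OF hy] .
qed

end
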